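(* Let $n\ge 538$ be an integer and $\lambda$ a positive integer. Then there is no graphical $2$-$\left(\binom{n}{2},5,\lambda\right)$ design.
   Context: For a finite set $X$ and integer $t\ge 0$, $\binom{X}{t}$ denotes the set of $t$-subsets of $X$. A $t$-$(v,k,\lambda)$ design is a pair $(X,\mathcal{B})$ with $|X|=v$ and $\mathcal{B}\subseteq\binom{X}{k}$ (the blocks) such that every $T\in\binom{X}{t}$ is contained in exactly $\lambda$ blocks; it is moreover required that $t\ge 2$, $t<k$, $\mathcal{B}\neq\emptyset$ and $\mathcal{B}\neq\binom{X}{k}$. An automorphism of $(X,\mathcal{B})$ is a bijection $\sigma:X\to X$ with $\sigma(\mathcal{B})=\mathcal{B}$. Let $V$ be a set with $|V|=n$; the symmetric group $\mathrm{Sym}(V)$ acts on $\binom{V}{2}$ (the edge set of the complete graph $K_n$), giving a permutation group $\mathcal{S}_n^{[2]}\le \mathrm{Sym}(\binom{V}{2})$. A $t$-$(v,k,\lambda)$ design $(X,\mathcal{B})$ is graphical if $v=\binom{n}{2}$ and its automorphism group contains a subgroup that is permutation isomorphic to $\mathcal{S}_n^{[2]}$ (equivalently, one may take $X$ to be the edge set of $K_n$ and $\mathcal{B}$ a set of $k$-edge subgraphs of $K_n$ closed under graph isomorphism, i.e. a union of $\mathcal{S}_n^{[2]}$-orbits on $\binom{X}{k}$). *)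

theory Defs
  imports Main
begin

definition subsets_of_size :: "'a set \<Rightarrow> nat \<Rightarrow> 'a set set" where
  "subsets_of_size X t = {S. S \<subseteq> X \<and> card S = t}"

definition t_design :: "'a set \<Rightarrow> 'a set set \<Rightarrow> nat \<Rightarrow> nat \<Rightarrow> nat \<Rightarrow> nat \<Rightarrow> bool" where
  "t_design X B t v k lam \<longleftrightarrow>
     finite X \<and> card X = v \<and> B \<subseteq> subsets_of_size X k \<and>
     (\<forall>T \<in> subsets_of_size X t. card {b \<in> B. T \<subseteq> b} = lam) \<and>
     2 \<le> t \<and> t < k \<and> B \<noteq> {} \<and> B \<noteq> subsets_of_size X k"

definition design_automorphism :: "'a set \<Rightarrow> 'a set set \<Rightarrow> ('a \<Rightarrow> 'a) \<Rightarrow> bool" where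
  "design_automorphism X B \<sigma> \<longleftrightarrow> bij_betw \<sigma> X X \<and> (\<lambda>b. \<sigma> ` b) ` B = B"

text \<open>Graphical design: v = n choose 2 and the automorphism group contains a subgroup
  permutation isomorphic to S_n^[2], i.e. there is an n-set V and a bijection phi from
  the 2-subsets of V onto X such that, for every permutation sigma of V, the conjugate
  phi o sigma^[2] o phi^-1 is an automorphism of (X, B).\<close>
definition graphical :: "nat \<Rightarrow> 'a set \<Rightarrow> 'a set set \<Rightarrow> bool" where
  "graphical n X B \<longleftrightarrow> card X = n choose 2 \<and>
     (\<exists>(V :: nat set) (\<phi> :: nat set \<Rightarrow> 'a).
        finite V \<and> card V = n \<and> bij_betw \<phi> (subsets_of_size V 2) X \<and>
        (\<forall>\<sigma>. bij_betw \<sigma> V V \<longrightarrow>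
           design_automorphism X B (\<lambda>x. \<phi> (\<sigma> ` (inv_into (subsets_of_size V 2) \<phi> x)))))"

end

theory Submission
  imports Defs "HOL-Combinatorics.Transposition"
begin

lemma perm_lists:
  assumes "length xs = length ys" "distinct xs" "distinct ys" "set xs \<subseteq> V" "set ys \<subseteq> V"
  shows "\<exists>\<sigma>. bij_betw \<sigma> V V \<and> map \<sigma> xs = ys"
  using assms
proof (induction xs ys rule: list_induct2)
  case Nil
  have "bij_betw id V V" by (rule bij_betw_id)
  then show ?case by blast
next
  case (Cons x xs y ys)
  have pr: "distinct xs" "distinct ys" "set xs \<subseteq> V" "set ys \<subseteq> V" "x \<notin> set xs" "y \<notin> set ys"
    "x \<in> V" "y \<in> V"
    using Cons.prems by auto
  have "\<exists>\<sigma>. bij_betw \<sigma> V V \<and> map \<sigma> xs = ys" using Cons.IH pr(1-4) by blast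
  then obtain s where s: "bij_betw s V V" "map s xs = ys" by blast
  define t where "t = transpose (s x) y \<circ> s"
  have sx: "s x \<in> V" using bij_betwE[OF s(1)] pr(7) by blast
  have "bij_betw (transpose (s x) y) V V" using sx pr(8) by simp
  then have tb: "bij_betw t V V" unfolding t_def using s(1) by (rule bij_betw_trans[rotated])
  have inj: "inj_on s V" using s(1) by (rule bij_betw_imp_inj_on)
  have sxn: "s x \<notin> set ys"
  proof
    assume "s x \<in> set ys"
    then obtain z where z: "z \<in> set xs" "s z = s x" using s(2) by auto
    have zV: "z \<in> V" using z(1) pr(3) by blast
    have "z = x" using inj_onD[OF inj z(2) zV pr(7)] .
    then show False using z(1) pr(5) by simp
  qed
  have tz: "t z = s z" if z: "z \<in> set xs" for z
  proof -
    have "s z \<in> set ys" using z s(2) by auto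
    then have "s z \<noteq> s x" "s z \<noteq> y" using sxn pr(6) by auto
    then show ?thesis unfolding t_def by simp
  qed
  have "map t xs = map s xs" by (rule map_cong) (simp_all add: tz)
  then have "map t xs = ys" using s(2) by simp
  moreover have "t x = y" by (simp add: t_def)
  ultimately have "bij_betw t V V \<and> map t (x # xs) = y # ys" using tb by simp
  then show ?case by (intro exI[where x=t])
qed

definition pr :: "'a \<times> 'a \<Rightarrow> 'a set" where "pr p = {fst p, snd p}"
definition flat :: "('a \<times> 'a) list \<Rightarrow> 'a list" where "flat ps = concat (map (\<lambda>p. [fst p, snd p]) ps)"

lemma flat_simps[simp]: "flat [] = []" "flat (p # ps) = fst p # snd p # flat ps"
  by (simp_all add: flat_def)

lemma set_flat: "set (flat ps) = \<Union>(pr ` set ps)"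
  by (induction ps) (simp_all add: pr_def)

lemma length_flat: "length (flat ps) = 2 * length ps"
  by (induction ps) simp_all

lemma map_flat:
  assumes "length ps = length qs" "map s (flat ps) = flat qs"
  shows "map (\<lambda>p. s ` pr p) ps = map pr qs"
  using assms by (induction ps qs rule: list_induct2) (simp_all add: pr_def)

lemma matching_list:
  assumes "finite E" "\<forall>e\<in>E. \<exists>a b. a \<noteq> b \<and> e = {a, b}"
    "\<forall>e\<in>E. \<forall>e'\<in>E. e \<noteq> e' \<longrightarrow> e \<inter> e' = {}"
  shows "\<exists>ps. distinct (flat ps) \<and> set (map pr ps) = E \<and> length ps = card E"
  using assms
proof (induction E rule: finite_induct)
  case empty
  have "distinct (flat []) \<and> set (map pr []) = {} \<and> length [] = card {}" by simp
  then show ?case by blast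
next
  case (insert e E)
  have p2: "\<forall>e\<in>E. \<exists>a b. a \<noteq> b \<and> e = {a, b}" using insert.prems(1) by blast
  have p3: "\<forall>e\<in>E. \<forall>e'\<in>E. e \<noteq> e' \<longrightarrow> e \<inter> e' = {}" using insert.prems(2) by blast
  have "\<exists>ps. distinct (flat ps) \<and> set (map pr ps) = E \<and> length ps = card E"
    using insert.IH p2 p3 by blast
  then obtain ps where ps: "distinct (flat ps)" "set (map pr ps) = E" "length ps = card E" by blast
  obtain a b where ab: "a \<noteq> b" "e = {a, b}" using insert.prems(1) by blast
  have dj: "e \<inter> e' = {}" if "e' \<in> E" for e'
  proof -
    have "e \<noteq> e'" using that insert.hyps(2) by blast
    then show ?thesis using insert.prems(2) that by blast
  qed
  have "a \<notin> \<Union>E" "b \<notin> \<Union>E" using dj ab by blast+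
  moreover have "set (flat ps) = \<Union>E" using ps(2) by (simp add: set_flat)
  ultimately have nab: "a \<notin> set (flat ps)" "b \<notin> set (flat ps)" by simp_all
  have "distinct (flat ((a,b) # ps))" using nab ab(1) ps(1) by simp
  moreover have "set (map pr ((a,b) # ps)) = insert e E" using ps(2) ab(2) by (simp add: pr_def)
  moreover have "length ((a,b) # ps) = card (insert e E)" using ps(3) insert.hyps by simp
  ultimately show ?case by blast
qed

lemma card_filter_sum:
  assumes "finite S"
  shows "card {x\<in>S. Q x} = (\<Sum>x\<in>S. if Q x then 1 else 0)"
proof -
  have "card {x\<in>S. Q x} = (\<Sum>x\<in>{x\<in>S. Q x}. 1)" by (rule card_eq_sum)
  also have "\<dots> = (\<Sum>x\<in>S. if Q x then 1 else 0)" using assms by (rule sum.inter_filter)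
  finally show ?thesis .
qed

lemma card_swap:
  assumes "finite A" "finite B"
  shows "(\<Sum>a\<in>A. card {b\<in>B. P a b}) = (\<Sum>b\<in>B. card {a\<in>A. P a b})"
proof -
  have "(\<Sum>a\<in>A. card {b\<in>B. P a b}) = (\<Sum>a\<in>A. \<Sum>b\<in>B. if P a b then 1 else 0)"
    using assms by (simp only: card_filter_sum)
  also have "\<dots> = (\<Sum>b\<in>B. \<Sum>a\<in>A. if P a b then 1 else 0)" by (rule sum.swap)
  also have "\<dots> = (\<Sum>b\<in>B. card {a\<in>A. P a b})"
    using assms by (simp only: card_filter_sum)
  finally show ?thesis .
qed

lemma core:
  fixes X :: "'a set" and F :: "'a set set" and R :: "'a \<Rightarrow> 'a \<Rightarrow> bool"
  assumes fin: "finite X" and FX: "F \<subseteq> subsets_of_size X 5"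
  and cnt: "\<forall>T \<in> subsets_of_size X 2. card {b\<in>F. T \<subseteq> b} = c"
  and nm: "\<forall>b\<in>F. \<exists>e\<in>b. \<exists>f\<in>b. e \<noteq> f \<and> R e f"
  and loc: "\<forall>e\<in>X. 25 * card {f\<in>X. f \<noteq> e \<and> R e f} < card {f\<in>X. f \<noteq> e \<and> \<not> R e f}"
  shows "F = {}"
proof (rule ccontr)
  assume Fne: "F \<noteq> {}"
  have bX: "\<And>b. b \<in> F \<Longrightarrow> b \<subseteq> X \<and> card b = 5" using FX by (auto simp: subsets_of_size_def)
  have finF: "finite F"
  proof -
    have "F \<subseteq> Pow X" using bX by auto
    then show ?thesis by (rule finite_subset) (simp add: fin)
  qed
  have dc: "(\<Sum>b\<in>F. card {p \<in> b \<times> b. fst p \<noteq> snd p \<and> Q (fst p) (snd p)})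
      = c * card {p \<in> X \<times> X. fst p \<noteq> snd p \<and> Q (fst p) (snd p)}" for Q
  proof -
    let ?Y = "{p \<in> X \<times> X. fst p \<noteq> snd p \<and> Q (fst p) (snd p)}"
    have finY: "finite ?Y" using fin by auto
    have "(\<Sum>b\<in>F. card {p \<in> b \<times> b. fst p \<noteq> snd p \<and> Q (fst p) (snd p)})
        = (\<Sum>b\<in>F. card {p\<in>?Y. fst p \<in> b \<and> snd p \<in> b})"
      by (rule sum.cong) (use bX in \<open>auto intro!: arg_cong[where f=card]\<close>)
    also have "\<dots> = (\<Sum>p\<in>?Y. card {b\<in>F. fst p \<in> b \<and> snd p \<in> b})"
      using card_swap[OF finF finY] .
    also have "\<dots> = (\<Sum>p\<in>?Y. c)"
    proof (rule sum.cong)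
      fix p assume "p \<in> ?Y"
      then have T: "{fst p, snd p} \<in> subsets_of_size X 2" by (auto simp: subsets_of_size_def)
      have "{b\<in>F. fst p \<in> b \<and> snd p \<in> b} = {b\<in>F. {fst p, snd p} \<subseteq> b}" by auto
      moreover have "card {b\<in>F. {fst p, snd p} \<subseteq> b} = c" using cnt T by blast
      ultimately show "card {b\<in>F. fst p \<in> b \<and> snd p \<in> b} = c" by (simp only:)
    qed simp
    finally show ?thesis by simp
  qed
  have cY: "card {p \<in> X \<times> X. fst p \<noteq> snd p \<and> Q (fst p) (snd p)}
      = (\<Sum>e\<in>X. card {f\<in>X. f \<noteq> e \<and> Q e f})" for Q
  proof -
    have "{p \<in> X \<times> X. fst p \<noteq> snd p \<and> Q (fst p) (snd p)} = Sigma X (\<lambda>e. {f\<in>X. f \<noteq> e \<and> Q e f})"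
      by auto
    then show ?thesis using fin by simp
  qed
  let ?A = "\<lambda>b. card {p \<in> b \<times> b. fst p \<noteq> snd p \<and> R (fst p) (snd p)}"
  let ?N = "\<lambda>b. card {p \<in> b \<times> b. fst p \<noteq> snd p \<and> \<not> R (fst p) (snd p)}"
  have "?N b \<le> 25 * ?A b" if "b \<in> F" for b
  proof -
    have fb: "finite b" "card b = 5" using bX[OF that] finite_subset[OF _ fin] by auto
    have "?N b \<le> card (b \<times> b)" using fb by (intro card_mono) auto
    also have "\<dots> = 25" using fb by (simp add: card_cartesian_product)
    finally have 1: "?N b \<le> 25" .
    have "\<exists>e\<in>b. \<exists>f\<in>b. e \<noteq> f \<and> R e f" using nm that by (rule bspec)
    then obtain e f where "e \<in> b" "f \<in> b" "e \<noteq> f" "R e f" by blast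
    then have "(e,f) \<in> {p \<in> b \<times> b. fst p \<noteq> snd p \<and> R (fst p) (snd p)}" by auto
    moreover have "finite {p \<in> b \<times> b. fst p \<noteq> snd p \<and> R (fst p) (snd p)}"
      by (rule finite_subset[of _ "b \<times> b"]) (auto simp: fb)
    ultimately have "?A b \<noteq> 0" using card_0_eq by blast
    then show ?thesis using 1 by linarith
  qed
  then have "(\<Sum>b\<in>F. ?N b) \<le> (\<Sum>b\<in>F. 25 * ?A b)" by (rule sum_mono)
  then have "(\<Sum>b\<in>F. ?N b) \<le> 25 * (\<Sum>b\<in>F. ?A b)" by (simp add: sum_distrib_left)
  then have ineq1: "c * (\<Sum>e\<in>X. card {f\<in>X. f \<noteq> e \<and> \<not> R e f}) \<le> 25 * (c * (\<Sum>e\<in>X. card {f\<in>X. f \<noteq> e \<and> R e f}))"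
    using dc[of "\<lambda>x y. \<not> R x y"] dc[of R] cY[of "\<lambda>x y. \<not> R x y"] cY[of R] by (simp only:)
  have Xne: "X \<noteq> {}" using Fne bX by force
  have ineq2: "25 * (\<Sum>e\<in>X. card {f\<in>X. f \<noteq> e \<and> R e f}) < (\<Sum>e\<in>X. card {f\<in>X. f \<noteq> e \<and> \<not> R e f})"
    unfolding sum_distrib_left using loc fin Xne by (intro sum_strict_mono) auto
  have c0: "c = 0"
  proof (rule ccontr)
    assume "c \<noteq> 0"
    then have "c * (25 * (\<Sum>e\<in>X. card {f\<in>X. f \<noteq> e \<and> R e f})) < c * (\<Sum>e\<in>X. card {f\<in>X. f \<noteq> e \<and> \<not> R e f})"
      using ineq2 by simp
    then show False using ineq1 by (simp add: algebra_simps)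
  qed
  obtain b where b: "b \<in> F" using Fne by blast
  obtain e f where ef: "e \<in> b" "f \<in> b" "e \<noteq> f" using nm b by blast
  have T: "{e, f} \<in> subsets_of_size X 2" using ef bX[OF b] by (auto simp: subsets_of_size_def)
  have "b \<in> {b\<in>F. {e,f} \<subseteq> b}" using b ef by auto
  moreover have "finite {b\<in>F. {e,f} \<subseteq> b}" using finF by auto
  ultimately have "card {b\<in>F. {e,f} \<subseteq> b} \<noteq> 0" by auto
  then show False using cnt T c0 by auto
qed


lemma count_all:
  assumes fin: "finite X" and T: "T \<subseteq> X" "card T = 2"
  shows "card {b \<in> subsets_of_size X 5. T \<subseteq> b} = (card X - 2) choose 3"
proof -
  have finT: "finite T" using T(1) fin by (rule finite_subset)
  have "bij_betw (\<lambda>b. b - T) {b \<in> subsets_of_size X 5. T \<subseteq> b} {c. c \<subseteq> X - T \<and> card c = 3}"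
  proof (rule bij_betw_byWitness[where f'="\<lambda>c. c \<union> T"])
    show "\<forall>a\<in>{b \<in> subsets_of_size X 5. T \<subseteq> b}. a - T \<union> T = a" by auto
    show "\<forall>a'\<in>{c. c \<subseteq> X - T \<and> card c = 3}. a' \<union> T - T = a'" by auto
    show "(\<lambda>b. b - T) ` {b \<in> subsets_of_size X 5. T \<subseteq> b} \<subseteq> {c. c \<subseteq> X - T \<and> card c = 3}"
    proof (rule image_subsetI)
      fix b assume "b \<in> {b \<in> subsets_of_size X 5. T \<subseteq> b}"
      then have b: "b \<subseteq> X" "card b = 5" "T \<subseteq> b" by (auto simp: subsets_of_size_def)
      have "finite b" using b(1) fin by (rule finite_subset)
      have "finite T" using b(3) \<open>finite b\<close> by (rule finite_subset)
      then have "card (b - T) = card b - card T" using b(3) by (rule card_Diff_subset)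
      then have "card (b - T) = 3" using b T by simp
      then show "b - T \<in> {c. c \<subseteq> X - T \<and> card c = 3}" using b by auto
    qed
    show "(\<lambda>c. c \<union> T) ` {c. c \<subseteq> X - T \<and> card c = 3} \<subseteq> {b \<in> subsets_of_size X 5. T \<subseteq> b}"
    proof (rule image_subsetI)
      fix c assume "c \<in> {c. c \<subseteq> X - T \<and> card c = 3}"
      then have c: "c \<subseteq> X - T" "card c = 3" by auto
      have "c \<subseteq> X" using c by auto
      then have "finite c" using fin by (rule finite_subset)
      moreover have "c \<inter> T = {}" using c by auto
      ultimately have "card (c \<union> T) = 5" using c T finT by (simp add: card_Un_disjoint)
      then show "c \<union> T \<in> {b \<in> subsets_of_size X 5. T \<subseteq> b}" using c T by (auto simp: subsets_of_size_def)
    qed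
  qed
  then have "card {b \<in> subsets_of_size X 5. T \<subseteq> b} = card {c. c \<subseteq> X - T \<and> card c = 3}"
    by (rule bij_betw_same_card)
  also have "\<dots> = card (X - T) choose 3" using fin by (simp add: n_subsets)
  also have "card (X - T) = card X - 2" using T finT by (simp add: card_Diff_subset)
  finally show ?thesis .
qed

lemma two_set_mem:
  assumes "g \<in> subsets_of_size V 2" "a \<in> g"
  shows "\<exists>z\<in>V. g = {a, z}"
proof -
  obtain x y where "g = {x, y}" "x \<noteq> y" using assms by (auto simp: subsets_of_size_def card_2_iff)
  then show ?thesis using assms by (auto simp: subsets_of_size_def)
qed

lemma loc_bound:
  assumes finV: "finite V" and cV: "card V = n" and n: "n \<ge> 538"
    and bij: "bij_betw \<phi> (subsets_of_size V 2) X"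
  defines "\<psi> \<equiv> inv_into (subsets_of_size V 2) \<phi>"
  shows "\<forall>e\<in>X. 25 * card {f\<in>X. f \<noteq> e \<and> \<psi> e \<inter> \<psi> f \<noteq> {}} < card {f\<in>X. f \<noteq> e \<and> \<not> \<psi> e \<inter> \<psi> f \<noteq> {}}"
proof
  fix e assume e: "e \<in> X"
  let ?E = "subsets_of_size V 2"
  have finE: "finite ?E"
  proof -
    have "?E \<subseteq> Pow V" by (auto simp: subsets_of_size_def)
    then show ?thesis by (rule finite_subset) (simp add: finV)
  qed
  have cE: "card ?E = n choose 2" using finV cV by (simp add: subsets_of_size_def n_subsets)
  have psi: "bij_betw \<psi> X ?E" unfolding \<psi>_def using bij by (rule bij_betw_inv_into)
  have finX: "finite X" using bij finE bij_betw_finite by blast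
  have cX: "card X = n choose 2" using bij_betw_same_card[OF bij] cE by simp
  have pe: "\<psi> e \<in> ?E" using psi e by (auto dest: bij_betwE)
  then obtain a b where ab: "\<psi> e = {a, b}" by (auto simp: subsets_of_size_def card_2_iff)
  let ?A = "{f\<in>X. f \<noteq> e \<and> \<psi> e \<inter> \<psi> f \<noteq> {}}"
  let ?N = "{f\<in>X. f \<noteq> e \<and> \<not> \<psi> e \<inter> \<psi> f \<noteq> {}}"
  have "\<psi> ` ?A \<subseteq> (\<lambda>z. {a, z}) ` V \<union> (\<lambda>z. {b, z}) ` V"
  proof
    fix g assume "g \<in> \<psi> ` ?A"
    then obtain f where f: "f \<in> X" "\<psi> e \<inter> \<psi> f \<noteq> {}" "g = \<psi> f" by auto
    have gE: "g \<in> ?E" using psi f by (auto dest: bij_betwE)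
    have "a \<in> g \<or> b \<in> g" using f ab by auto
    then show "g \<in> (\<lambda>z. {a, z}) ` V \<union> (\<lambda>z. {b, z}) ` V"
      using two_set_mem[OF gE] by blast
  qed
  then have "card (\<psi> ` ?A) \<le> card ((\<lambda>z. {a, z}) ` V \<union> (\<lambda>z. {b, z}) ` V)"
    using finV by (intro card_mono) auto
  also have "\<dots> \<le> card ((\<lambda>z. {a, z}) ` V) + card ((\<lambda>z. {b, z}) ` V)" by (rule card_Un_le)
  also have "\<dots> \<le> n + n" using card_image_le[OF finV] cV by (metis add_mono)
  finally have cA1: "card (\<psi> ` ?A) \<le> 2 * n" by simp
  have "inj_on \<psi> X" using psi bij_betw_def by blast
  then have "card (\<psi> ` ?A) = card ?A" by (rule card_image[OF inj_on_subset]) auto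
  then have cA: "card ?A \<le> 2 * n" using cA1 by simp
  have "card ?A + card ?N = card (?A \<union> ?N)" using finX by (intro card_Un_disjoint[symmetric]) auto
  also have "?A \<union> ?N = X - {e}" by auto
  also have "card (X - {e}) = card X - 1" using e finX by simp
  finally have sum: "card ?A + card ?N = (n choose 2) - 1" using cX by simp
  have "n * 537 \<le> n * (n - 1)" using n by (intro mult_le_mono2) simp
  moreover have "even (n * (n - 1))" by (cases "even n") auto
  then have "2 * (n choose 2) = n * (n - 1)" by (simp add: choose_two)
  ultimately have "n * 537 \<le> 2 * (n choose 2)" by simp
  then have "52 * n + 1 < n choose 2" using n by linarith
  then show "25 * card ?A < card ?N" using sum cA by linarith
qed


lemma get_list:
  assumes bij: "bij_betw \<phi> (subsets_of_size V 2) X"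
    and m: "m \<subseteq> X" "card m = 5"
    and disj: "\<forall>e\<in>m. \<forall>f\<in>m. e \<noteq> f \<longrightarrow> inv_into (subsets_of_size V 2) \<phi> e \<inter> inv_into (subsets_of_size V 2) \<phi> f = {}"
  shows "\<exists>ps. distinct (flat ps) \<and> pr ` set ps = inv_into (subsets_of_size V 2) \<phi> ` m
     \<and> length ps = 5 \<and> set (flat ps) \<subseteq> V"
proof -
  let ?E = "subsets_of_size V 2"
  let ?\<psi> = "inv_into ?E \<phi>"
  have psi: "bij_betw ?\<psi> X ?E" using bij by (rule bij_betw_inv_into)
  have "inj_on ?\<psi> X" using psi by (rule bij_betw_imp_inj_on)
  then have inj: "inj_on ?\<psi> m" using m(1) by (rule inj_on_subset)
  have finm: "finite m" using m(2) card_ge_0_finite by force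
  have sub: "?\<psi> ` m \<subseteq> ?E" using psi m(1) by (auto dest: bij_betwE)
  have two: "\<forall>g\<in>?\<psi> ` m. \<exists>a b. a \<noteq> b \<and> g = {a, b}"
  proof
    fix g assume "g \<in> ?\<psi> ` m"
    then have "card g = 2" using sub by (auto simp: subsets_of_size_def)
    then show "\<exists>a b. a \<noteq> b \<and> g = {a, b}" by (auto simp: card_2_iff)
  qed
  have pd: "\<forall>g\<in>?\<psi> ` m. \<forall>g'\<in>?\<psi> ` m. g \<noteq> g' \<longrightarrow> g \<inter> g' = {}"
  proof (intro ballI impI)
    fix g g' assume "g \<in> ?\<psi> ` m" "g' \<in> ?\<psi> ` m" "g \<noteq> g'"
    then obtain e f where "e \<in> m" "f \<in> m" "g = ?\<psi> e" "g' = ?\<psi> f" "e \<noteq> f" by auto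
    then show "g \<inter> g' = {}" using disj by auto
  qed
  obtain ps where ps: "distinct (flat ps)" "set (map pr ps) = ?\<psi> ` m" "length ps = card (?\<psi> ` m)"
    using matching_list[OF finite_imageI[OF finm] two pd] by blast
  have "card (?\<psi> ` m) = 5" using card_image[OF inj] m(2) by simp
  moreover have "set (flat ps) \<subseteq> V"
  proof -
    have "set (flat ps) = \<Union>(?\<psi> ` m)" using ps(2) by (simp add: set_flat)
    also have "\<dots> \<subseteq> V" using sub by (auto simp: subsets_of_size_def)
    finally show ?thesis .
  qed
  ultimately show ?thesis using ps by auto
qed

lemma match_trans:
  assumes bij: "bij_betw \<phi> (subsets_of_size V 2) X"
    and m0: "m0 \<subseteq> X" "card m0 = 5"
    "\<forall>e\<in>m0. \<forall>f\<in>m0. e \<noteq> f \<longrightarrow> inv_into (subsets_of_size V 2) \<phi> e \<inter> inv_into (subsets_of_size V 2) \<phi> f = {}"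
    and m: "m \<subseteq> X" "card m = 5"
    "\<forall>e\<in>m. \<forall>f\<in>m. e \<noteq> f \<longrightarrow> inv_into (subsets_of_size V 2) \<phi> e \<inter> inv_into (subsets_of_size V 2) \<phi> f = {}"
  shows "\<exists>\<sigma>. bij_betw \<sigma> V V \<and> (\<lambda>x. \<phi> (\<sigma> ` inv_into (subsets_of_size V 2) \<phi> x)) ` m0 = m"
proof -
  let ?E = "subsets_of_size V 2"
  let ?\<psi> = "inv_into ?E \<phi>"
  obtain ps0 where p0: "distinct (flat ps0)" "pr ` set ps0 = ?\<psi> ` m0" "length ps0 = 5" "set (flat ps0) \<subseteq> V"
    using get_list[OF bij m0] by blast
  obtain ps where p: "distinct (flat ps)" "pr ` set ps = ?\<psi> ` m" "length ps = 5" "set (flat ps) \<subseteq> V"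
    using get_list[OF bij m] by blast
  have "length (flat ps0) = length (flat ps)" using p0(3) p(3) by (simp add: length_flat)
  then obtain \<sigma> where s: "bij_betw \<sigma> V V" "map \<sigma> (flat ps0) = flat ps"
    using perm_lists[OF _ p0(1) p(1) p0(4) p(4)] by blast
  have "map (\<lambda>p. \<sigma> ` pr p) ps0 = map pr ps" using p0(3) p(3) s(2) by (intro map_flat) auto
  then have "set (map (\<lambda>p. \<sigma> ` pr p) ps0) = set (map pr ps)" by simp
  then have "(\<lambda>p. \<sigma> ` pr p) ` set ps0 = pr ` set ps" by simp
  then have "(\<lambda>g. \<sigma> ` g) ` (pr ` set ps0) = ?\<psi> ` m" using p(2) by (simp add: image_image)
  then have img: "(\<lambda>g. \<sigma> ` g) ` (?\<psi> ` m0) = ?\<psi> ` m" using p0(2) by simp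
  have "(\<lambda>x. \<phi> (\<sigma> ` ?\<psi> x)) ` m0 = \<phi> ` ((\<lambda>g. \<sigma> ` g) ` (?\<psi> ` m0))" by (simp add: image_image)
  also have "\<dots> = \<phi> ` (?\<psi> ` m)" using img by simp
  also have "\<dots> = m"
  proof -
    have "\<phi> (?\<psi> y) = y" if "y \<in> m" for y
      using m(1) that by (intro bij_betw_inv_into_right[OF bij]) auto
    then show ?thesis by (simp add: image_image)
  qed
  finally show ?thesis using s(1) by blast
qed

theorem mainTheorem1:
  fixes n lam :: nat
  assumes "n \<ge> 538" and "lam > 0"
  shows "\<not> (\<exists>(X :: 'a set) B. t_design X B 2 (n choose 2) 5 lam \<and> graphical n X B)"
proof
  assume "\<exists>(X :: 'a set) B. t_design X B 2 (n choose 2) 5 lam \<and> graphical n X B"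
  then obtain X :: "'a set" and B where des: "t_design X B 2 (n choose 2) 5 lam" and gr: "graphical n X B"
    by blast
  have finX: "finite X" and BS: "B \<subseteq> subsets_of_size X 5"
    and cnt: "\<forall>T \<in> subsets_of_size X 2. card {b\<in>B. T \<subseteq> b} = lam"
    and Bne: "B \<noteq> {}" and Bnall: "B \<noteq> subsets_of_size X 5"
    using des unfolding t_design_def by auto
  obtain V :: "nat set" and \<phi> where finV: "finite V" and cV: "card V = n"
    and bij: "bij_betw \<phi> (subsets_of_size V 2) X"
    and aut: "\<forall>\<sigma>. bij_betw \<sigma> V V \<longrightarrow>
           design_automorphism X B (\<lambda>x. \<phi> (\<sigma> ` (inv_into (subsets_of_size V 2) \<phi> x)))"
    using gr unfolding graphical_def by blast
  define \<psi> where "\<psi> = inv_into (subsets_of_size V 2) \<phi>"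
  have loc: "\<forall>e\<in>X. 25 * card {f\<in>X. f \<noteq> e \<and> \<psi> e \<inter> \<psi> f \<noteq> {}} < card {f\<in>X. f \<noteq> e \<and> \<not> \<psi> e \<inter> \<psi> f \<noteq> {}}"
    unfolding \<psi>_def using loc_bound[OF finV cV assms(1) bij] by simp
  have finS5: "finite (subsets_of_size X 5)"
  proof -
    have "subsets_of_size X 5 \<subseteq> Pow X" by (auto simp: subsets_of_size_def)
    then show ?thesis by (rule finite_subset) (simp add: finX)
  qed
  show False
  proof (cases "\<forall>b\<in>B. \<exists>e\<in>b. \<exists>f\<in>b. e \<noteq> f \<and> \<psi> e \<inter> \<psi> f \<noteq> {}")
    case True
    have "B = {}" using core[where R="\<lambda>e f. \<psi> e \<inter> \<psi> f \<noteq> {}", OF finX BS cnt True loc] .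
    then show False using Bne by simp
  next
    case False
    then obtain m0 where m0B: "m0 \<in> B" and m0d: "\<forall>e\<in>m0. \<forall>f\<in>m0. e \<noteq> f \<longrightarrow> \<psi> e \<inter> \<psi> f = {}"
      by blast
    have m0: "m0 \<subseteq> X" "card m0 = 5" using m0B BS by (auto simp: subsets_of_size_def)
    have allm: "m \<in> B" if mS: "m \<in> subsets_of_size X 5" and md: "\<forall>e\<in>m. \<forall>f\<in>m. e \<noteq> f \<longrightarrow> \<psi> e \<inter> \<psi> f = {}" for m
    proof -
      have m: "m \<subseteq> X" "card m = 5" using mS by (auto simp: subsets_of_size_def)
      obtain \<sigma> where s: "bij_betw \<sigma> V V" and im: "(\<lambda>x. \<phi> (\<sigma> ` \<psi> x)) ` m0 = m"
        using match_trans[OF bij m0 _ m] m0d md unfolding \<psi>_def by blast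
      have "design_automorphism X B (\<lambda>x. \<phi> (\<sigma> ` \<psi> x))" using aut s unfolding \<psi>_def by blast
      then have "(\<lambda>b. (\<lambda>x. \<phi> (\<sigma> ` \<psi> x)) ` b) ` B = B" by (simp add: design_automorphism_def)
      then have "(\<lambda>x. \<phi> (\<sigma> ` \<psi> x)) ` m0 \<in> B" using m0B by blast
      then show ?thesis using im by simp
    qed
    let ?F = "subsets_of_size X 5 - B"
    have FS: "?F \<subseteq> subsets_of_size X 5" by blast
    have cntF: "\<forall>T \<in> subsets_of_size X 2. card {b\<in>?F. T \<subseteq> b} = ((card X - 2) choose 3) - lam"
    proof
      fix T assume T: "T \<in> subsets_of_size X 2"
      have "{b\<in>?F. T \<subseteq> b} = {b\<in>subsets_of_size X 5. T \<subseteq> b} - {b\<in>B. T \<subseteq> b}" by blast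
      moreover have "{b\<in>B. T \<subseteq> b} \<subseteq> {b\<in>subsets_of_size X 5. T \<subseteq> b}" using BS by blast
      moreover have "finite {b\<in>B. T \<subseteq> b}" using finite_subset[OF BS finS5] by simp
      ultimately have "card {b\<in>?F. T \<subseteq> b} = card {b\<in>subsets_of_size X 5. T \<subseteq> b} - card {b\<in>B. T \<subseteq> b}"
        by (simp add: card_Diff_subset)
      moreover have "card {b\<in>subsets_of_size X 5. T \<subseteq> b} = (card X - 2) choose 3"
        using T finX by (intro count_all) (auto simp: subsets_of_size_def)
      ultimately show "card {b\<in>?F. T \<subseteq> b} = ((card X - 2) choose 3) - lam" using cnt T by simp
    qed
    have nmF: "\<forall>b\<in>?F. \<exists>e\<in>b. \<exists>f\<in>b. e \<noteq> f \<and> \<psi> e \<inter> \<psi> f \<noteq> {}"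
      using allm by blast
    have "?F = {}" using core[where R="\<lambda>e f. \<psi> e \<inter> \<psi> f \<noteq> {}", OF finX FS cntF nmF loc] .
    then show False using BS Bnall by blast
  qed
qed

end
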